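(* Let $X,Y$ be Banach spaces, let $F:X\rightrightarrows Y$ be a closed convex set-valued mapping, let $A\subset X$ be a closed convex set, let $\bar y\in Y$, and put $S:=F^{-1}(\bar y)\cap A$. Let $\bar x\in S$. Then $$\frac{1}{{\rm subreg}_AF(\bar x,\bar y)}=\eta_A(F,\bar x,\bar y)=\frac{1}{\tau_A(F,\bar x,\bar y)},$$ where these three quantities are defined below.
   Context: $B_X,B_Y$ denote the closed unit balls of $X,Y$; $B(x,\delta)$ is the open ball of center $x$ and radius $\delta$. $F$ closed convex means its graph ${\rm gph}(F)=\{(x,y):y\in F(x)\}$ is a closed convex subset of $X\times Y$. For a closed convex set $C$ and $a\in C$, the contingent cone $T(C,a)$ is the set of $v$ for which there exist $v_n\to v$ and $t_n\to0^+$ with $a+t_nv_n\in C$ for all $n$. For $(x,y)\in{\rm gph}(F)$ the graphical derivative is $DF(x,y)(u):=\{v\in Y:(u,v)\in T({\rm gph}(F),(x,y))\}$, and $DF^{-1}(y,x)(v):=\{u\in X:(u,v)\in T({\rm gph}(F),(x,y))\}$; for a set $W\subset Y$, $DF^{-1}(y,x)(W)=\bigcup_{v\in W}DF^{-1}(y,x)(v)$. Distances to the empty set are $+\infty$; $1/0=+\infty$, $1/(+\infty)=0$. Definitions: ${\rm subreg}_AF(\bar x,\bar y):=\inf\{\tau>0:\exists\delta>0$ such that $d(x,S)\le\tau(d(\bar y,F(x))+d(x,A))$ for all $x\in B(\bar x,\delta)\}$ (infimum of the empty set is $+\infty$). For $x\in S$ and $\eta>0$, condition (P) is: $DF^{-1}(\bar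 y,x)(\eta_1B_Y)\cap(T(A,x)+\eta_2B_X)\subset T(S,x)+B_X$ for all $\eta_1,\eta_2\ge0$ with $\eta_1+\eta_2<\eta$. For $x\in S$ and $\tau>0$, condition (Q) is: $d(h,T(S,x))\le\tau\big(d(0,DF(x,\bar y)(h))+d(h,T(A,x))\big)$ for all $h\in X$. $\eta_A(F,\bar x,\bar y):=\sup\{\eta>0:\exists\delta>0$ such that (P) holds for every $x\in S\cap B(\bar x,\delta)\}$ (supremum of the empty set is $0$). $\tau_A(F,\bar x,\bar y):=\inf\{\tau>0:\exists\delta>0$ such that (Q) holds for every $x\in S\cap B(\bar x,\delta)\}$ (infimum of the empty set is $+\infty$). *)

theory Defs
  imports "HOL-Analysis.Analysis" "HOL-Library.Extended_Real"
begin

definition edist_set :: "'a::real_normed_vector \<Rightarrow> 'a set \<Rightarrow> ereal" where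
  "edist_set x C = (if C = {} then \<infinity> else ereal (infdist x C))"

definition gph :: "('a \<Rightarrow> 'b set) \<Rightarrow> ('a \<times> 'b) set" where
  "gph F = {(x, y). y \<in> F x}"

definition contingent_cone :: "'a::real_normed_vector set \<Rightarrow> 'a \<Rightarrow> 'a set" where
  "contingent_cone C a = {v. \<exists>vs ts. (vs \<longlonglongrightarrow> v) \<and> (ts \<longlonglongrightarrow> 0) \<and> (\<forall>n. ts n > (0::real))
      \<and> (\<forall>n. a + ts n *\<^sub>R vs n \<in> C)}"

definition graph_deriv ::
  "('a::real_normed_vector \<Rightarrow> 'b::real_normed_vector set) \<Rightarrow> 'a \<Rightarrow> 'b \<Rightarrow> 'a \<Rightarrow> 'b set" where
  "graph_deriv F x y u = {v. (u, v) \<in> contingent_cone (gph F) (x, y)}"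

definition graph_deriv_inv_set ::
  "('a::real_normed_vector \<Rightarrow> 'b::real_normed_vector set) \<Rightarrow> 'b \<Rightarrow> 'a \<Rightarrow> 'b set \<Rightarrow> 'a set" where
  "graph_deriv_inv_set F y x W = (\<Union>v\<in>W. {u. (u, v) \<in> contingent_cone (gph F) (x, y)})"

definition set_plus :: "'a::real_normed_vector set \<Rightarrow> 'a set \<Rightarrow> 'a set" where
  "set_plus P Q = {p + q | p q. p \<in> P \<and> q \<in> Q}"

definition set_scale :: "real \<Rightarrow> 'a::real_normed_vector set \<Rightarrow> 'a set" where
  "set_scale t P = (\<lambda>p. t *\<^sub>R p) ` P"

definition solset :: "('a \<Rightarrow> 'b set) \<Rightarrow> 'a set \<Rightarrow> 'b \<Rightarrow> 'a set" where
  "solset F A yb = {x. yb \<in> F x} \<inter> A"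

definition subreg ::
  "('a::real_normed_vector \<Rightarrow> 'b::real_normed_vector set) \<Rightarrow> 'a set \<Rightarrow> 'a \<Rightarrow> 'b \<Rightarrow> ereal" where
  "subreg F A xb yb = Inf (ereal ` {\<tau>. \<tau> > 0 \<and> (\<exists>\<delta>>0. \<forall>x\<in>ball xb \<delta>.
      edist_set x (solset F A yb) \<le> ereal \<tau> * (edist_set yb (F x) + edist_set x A))})"

definition condP ::
  "('a::real_normed_vector \<Rightarrow> 'b::real_normed_vector set) \<Rightarrow> 'a set \<Rightarrow> 'b \<Rightarrow> 'a \<Rightarrow> real \<Rightarrow> bool" where
  "condP F A yb x \<eta> = (\<forall>\<eta>1 \<eta>2. \<eta>1 \<ge> 0 \<longrightarrow> \<eta>2 \<ge> 0 \<longrightarrow> \<eta>1 + \<eta>2 < \<eta> \<longrightarrow>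
      graph_deriv_inv_set F yb x (set_scale \<eta>1 (cball 0 1))
        \<inter> set_plus (contingent_cone A x) (set_scale \<eta>2 (cball 0 1))
      \<subseteq> set_plus (contingent_cone (solset F A yb) x) (cball 0 1))"

definition condQ ::
  "('a::real_normed_vector \<Rightarrow> 'b::real_normed_vector set) \<Rightarrow> 'a set \<Rightarrow> 'b \<Rightarrow> 'a \<Rightarrow> real \<Rightarrow> bool" where
  "condQ F A yb x \<tau> = (\<forall>h. edist_set h (contingent_cone (solset F A yb) x)
      \<le> ereal \<tau> * (edist_set 0 (graph_deriv F x yb h) + edist_set h (contingent_cone A x)))"

definition eta_A ::
  "('a::real_normed_vector \<Rightarrow> 'b::real_normed_vector set) \<Rightarrow> 'a set \<Rightarrow> 'a \<Rightarrow> 'b \<Rightarrow> ereal" where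
  "eta_A F A xb yb = (let E = {\<eta>. \<eta> > 0 \<and> (\<exists>\<delta>>0. \<forall>x\<in>solset F A yb \<inter> ball xb \<delta>. condP F A yb x \<eta>)}
      in if E = {} then 0 else Sup (ereal ` E))"

definition tau_A ::
  "('a::real_normed_vector \<Rightarrow> 'b::real_normed_vector set) \<Rightarrow> 'a set \<Rightarrow> 'a \<Rightarrow> 'b \<Rightarrow> ereal" where
  "tau_A F A xb yb = Inf (ereal ` {\<tau>. \<tau> > 0 \<and> (\<exists>\<delta>>0. \<forall>x\<in>solset F A yb \<inter> ball xb \<delta>. condQ F A yb x \<tau>)})"

text \<open>Reciprocal on [0,+\<infinity>] with 1/0 = +\<infinity>, 1/(+\<infinity>) = 0 (this is ereal's inverse).\<close>
lemma "inverse (0::ereal) = \<infinity>" "inverse (\<infinity>::ereal) = 0" by (simp_all add: zero_ereal_def)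

end

theory Submission imports Defs begin

lemma edist_ne: "C \<noteq> {} \<Longrightarrow> edist_set x C = ereal (infdist x C)"
  by (simp add: edist_set_def)

lemma cc_zero: assumes "a \<in> C" shows "0 \<in> contingent_cone C a"
  unfolding contingent_cone_def
proof (intro CollectI exI conjI allI)
  show "(\<lambda>n. 0) \<longlonglongrightarrow> (0::'a)" by simp
  show "(\<lambda>n. inverse (real (Suc n))) \<longlonglongrightarrow> 0" by (rule LIMSEQ_inverse_real_of_nat)
  fix n show "0 < inverse (real (Suc n))" by simp
  show "a + inverse (real (Suc n)) *\<^sub>R 0 \<in> C" using assms by simp
qed

lemma conv_step: assumes "convex C" "p \<in> C" "q \<in> C" "0 \<le> s" "s \<le> 1"
  shows "p + s *\<^sub>R (q - p) \<in> C"
proof -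
  have "(1 - s) *\<^sub>R p + s *\<^sub>R q \<in> C" using assms by (simp add: convexD)
  moreover have "(1 - s) *\<^sub>R p + s *\<^sub>R q = p + s *\<^sub>R (q - p)" by (simp add: algebra_simps)
  ultimately show ?thesis by simp
qed

lemma cc_convex: assumes "convex C" "a \<in> C" "c \<in> C" "(l::real) \<ge> 0"
  shows "l *\<^sub>R (c - a) \<in> contingent_cone C a"
  unfolding contingent_cone_def
proof (intro CollectI exI conjI allI)
  show "(\<lambda>n. l *\<^sub>R (c - a)) \<longlonglongrightarrow> l *\<^sub>R (c - a)" by simp
  show "(\<lambda>n. inverse (real (Suc n)) / (1 + l)) \<longlonglongrightarrow> 0"
    using tendsto_divide_zero[OF LIMSEQ_inverse_real_of_nat] by simp
  fix n show "0 < inverse (real (Suc n)) / (1 + l)" using assms by simp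
  have le: "inverse (real (Suc n)) / (1 + l) * l \<le> 1"
  proof -
    have "inverse (real (Suc n)) \<le> 1" by (simp add: inverse_le_1_iff)
    hence "inverse (real (Suc n)) * l \<le> 1 + l" using assms(4)
      using mult_right_mono[OF \<open>inverse (real (Suc n)) \<le> 1\<close> assms(4)] by simp
    hence "(inverse (real (Suc n)) * l) / (1 + l) \<le> 1" using assms(4) by (simp add: divide_le_eq_1)
    thus ?thesis by simp
  qed
  have "a + (inverse (real (Suc n)) / (1 + l) * l) *\<^sub>R (c - a) \<in> C"
    by (rule conv_step) (use assms le in auto)
  thus "a + (inverse (real (Suc n)) / (1 + l)) *\<^sub>R (l *\<^sub>R (c - a)) \<in> C" by simp
qed

lemma cc_scale: assumes "v \<in> contingent_cone C a" "(l::real) > 0"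
  shows "l *\<^sub>R v \<in> contingent_cone C a"
proof -
  obtain vs ts where h: "vs \<longlonglongrightarrow> v" "ts \<longlonglongrightarrow> 0" "\<forall>n. ts n > 0" "\<forall>n. a + ts n *\<^sub>R vs n \<in> C"
    using assms(1) unfolding contingent_cone_def by blast
  show ?thesis unfolding contingent_cone_def
  proof (intro CollectI exI conjI allI)
    show "(\<lambda>n. l *\<^sub>R vs n) \<longlonglongrightarrow> l *\<^sub>R v" using h(1) by (intro tendsto_intros)
    show "(\<lambda>n. ts n / l) \<longlonglongrightarrow> 0" using tendsto_divide_zero[OF h(2)] by simp
    fix n show "0 < ts n / l" using h(3) assms(2) by simp
    show "a + (ts n / l) *\<^sub>R (l *\<^sub>R vs n) \<in> C" using h(4) assms(2) by simp
  qed
qed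

lemma cc_approx: assumes "v \<in> contingent_cone C a" "e > 0"
  shows "\<exists>c\<in>C. \<exists>m\<ge>0. norm (v - m *\<^sub>R (c - a)) < e"
proof -
  obtain vs ts where h: "vs \<longlonglongrightarrow> v" "ts \<longlonglongrightarrow> 0" "\<forall>n. ts n > 0" "\<forall>n. a + ts n *\<^sub>R vs n \<in> C"
    using assms(1) unfolding contingent_cone_def by blast
  from h(1) assms(2) obtain n where "dist (vs n) v < e"
    unfolding LIMSEQ_def by blast
  hence "norm (v - vs n) < e" by (simp add: dist_norm norm_minus_commute)
  moreover have "inverse (ts n) *\<^sub>R ((a + ts n *\<^sub>R vs n) - a) = vs n" using h(3)
    by (metis add_diff_cancel_left' less_irrefl scaleR_scaleR left_inverse scaleR_one)
  moreover have "inverse (ts n) \<ge> 0" using h(3) by (simp add: less_imp_le)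
  ultimately show ?thesis using h(4) by metis
qed

lemma infdist_lt: assumes "A \<noteq> {}" "infdist x A < r" shows "\<exists>a\<in>A. dist x a < r"
  using assms by (simp add: infdist_notempty cINF_less_iff)

lemma infdist_ge: assumes "A \<noteq> {}" "\<And>a. a \<in> A \<Longrightarrow> r \<le> dist x a" shows "r \<le> infdist x A"
  using assms by (simp add: infdist_notempty cINF_greatest)

lemma solset_convex: assumes "convex (gph F)" "convex A" shows "convex (solset F A yb)"
proof -
  have "convex {x. yb \<in> F x}"
    unfolding convex_def
  proof (intro ballI allI impI)
    fix x y u v assume "x \<in> {x. yb \<in> F x}" "y \<in> {x. yb \<in> F x}" "(0::real) \<le> u" "0 \<le> v" "u + v = 1"
    hence "(x, yb) \<in> gph F" "(y, yb) \<in> gph F" by (auto simp: gph_def)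
    hence "u *\<^sub>R (x, yb) + v *\<^sub>R (y, yb) \<in> gph F"
      by (rule convexD[OF assms(1)]) (use \<open>0 \<le> u\<close> \<open>0 \<le> v\<close> \<open>u + v = 1\<close> in auto)
    moreover have "u *\<^sub>R yb + v *\<^sub>R yb = yb" using \<open>u+v=1\<close> by (metis scaleR_add_left scaleR_one)
    ultimately show "u *\<^sub>R x + v *\<^sub>R y \<in> {x. yb \<in> F x}" by (simp add: gph_def)
  qed
  thus ?thesis unfolding solset_def using assms(2) by (rule convex_Int)
qed

lemma in_set_scale: assumes "norm z \<le> r" shows "z \<in> set_scale r (cball 0 1)"
proof (cases "r = 0")
  case True
  hence "z = 0" using assms by simp
  thus ?thesis unfolding set_scale_def using True by (auto intro: image_eqI[of _ _ 0])
next
  case False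
  hence rp: "r > 0" using assms norm_ge_zero[of z] by linarith
  have "z = r *\<^sub>R (inverse r *\<^sub>R z)" using rp by simp
  moreover have "inverse r *\<^sub>R z \<in> cball 0 1" using rp assms by (simp add: field_simps)
  ultimately show ?thesis unfolding set_scale_def by blast
qed

lemma set_scale_norm: assumes "z \<in> set_scale r (cball 0 1)" "r \<ge> 0" shows "norm z \<le> r"
proof -
  from assms obtain b where "norm b \<le> 1" "z = r *\<^sub>R b" unfolding set_scale_def by auto
  thus ?thesis using assms(2) by (simp add: mult_left_le)
qed

lemma inf_sum_bound:
  fixes P :: "'a::metric_space set" and Q :: "'b::metric_space set"
  assumes "P \<noteq> {}" "Q \<noteq> {}" "t > 0"
    and "\<And>a b. a \<in> P \<Longrightarrow> b \<in> Q \<Longrightarrow> c \<le> t * (dist p a + dist q b)"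
  shows "c \<le> t * (infdist p P + infdist q Q)"
proof -
  have "c / t - infdist p P \<le> infdist q Q"
  proof (rule infdist_ge[OF assms(2)])
    fix b assume b: "b \<in> Q"
    have "c / t - dist q b \<le> infdist p P"
    proof (rule infdist_ge[OF assms(1)])
      fix a assume "a \<in> P"
      hence "c \<le> t * (dist p a + dist q b)" using assms(4) b by blast
      thus "c / t - dist q b \<le> dist p a" using assms(3) by (simp add: field_simps)
    qed
    thus "c / t - infdist p P \<le> dist q b" by linarith
  qed
  thus ?thesis using assms(3) by (simp add: field_simps)
qed

lemma Q_imp_P:
  assumes Q: "condQ F A yb x \<tau>" and tp: "\<tau> > 0" and xS: "x \<in> solset F A yb"
  shows "condP F A yb x (1/\<tau>)"
  unfolding condP_def
proof (intro allI impI subsetI)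
  fix \<eta>1 \<eta>2 u assume e1: "0 \<le> \<eta>1" and e2: "0 \<le> \<eta>2" and lt: "\<eta>1 + \<eta>2 < 1/\<tau>"
    and u: "u \<in> graph_deriv_inv_set F yb x (set_scale \<eta>1 (cball 0 1))
        \<inter> set_plus (contingent_cone A x) (set_scale \<eta>2 (cball 0 1))"
  from u obtain v where v: "v \<in> set_scale \<eta>1 (cball 0 1)" "(u,v) \<in> contingent_cone (gph F) (x,yb)"
    unfolding graph_deriv_inv_set_def by blast
  have nv: "norm v \<le> \<eta>1" by (rule set_scale_norm[OF v(1) e1])
  from u obtain w c where w: "w \<in> contingent_cone A x" "c \<in> set_scale \<eta>2 (cball 0 1)" "u = w + c"
    unfolding set_plus_def by blast
  have nw: "norm (u - w) \<le> \<eta>2" using set_scale_norm[OF w(2) e2] w(3) by simp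
  have DFne: "v \<in> graph_deriv F x yb u" by (simp add: graph_deriv_def v(2))
  have d1: "infdist 0 (graph_deriv F x yb u) \<le> \<eta>1"
    using infdist_le[OF DFne, of 0] nv by (simp add: dist_norm)
  have d2: "infdist u (contingent_cone A x) \<le> \<eta>2"
    using infdist_le[OF w(1), of u] nw by (simp add: dist_norm)
  have xA: "x \<in> A" using xS by (simp add: solset_def)
  have TSne: "0 \<in> contingent_cone (solset F A yb) x" using cc_zero[OF xS] .
  have TAne: "0 \<in> contingent_cone A x" using cc_zero[OF xA] .
  from Q have "edist_set u (contingent_cone (solset F A yb) x) \<le> ereal \<tau> *
      (edist_set 0 (graph_deriv F x yb u) + edist_set u (contingent_cone A x))"
    unfolding condQ_def by blast
  hence "infdist u (contingent_cone (solset F A yb) x) \<le> \<tau> *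
      (infdist 0 (graph_deriv F x yb u) + infdist u (contingent_cone A x))"
  proof -
    have "edist_set u (contingent_cone (solset F A yb) x) = ereal (infdist u (contingent_cone (solset F A yb) x))"
      "edist_set 0 (graph_deriv F x yb u) = ereal (infdist 0 (graph_deriv F x yb u))"
      "edist_set u (contingent_cone A x) = ereal (infdist u (contingent_cone A x))"
      using TSne TAne DFne by (auto intro!: edist_ne)
    with \<open>edist_set u _ \<le> _\<close> show ?thesis by simp
  qed
  also have "\<dots> \<le> \<tau> * (\<eta>1 + \<eta>2)" using d1 d2 tp by (intro mult_left_mono) auto
  also have "\<dots> < 1" using lt tp by (simp add: field_simps)
  finally obtain s where s: "s \<in> contingent_cone (solset F A yb) x" "dist u s < 1"
    using infdist_lt[of "contingent_cone (solset F A yb) x" u 1] TSne by blast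
  have "u = s + (u - s)" by simp
  moreover have "u - s \<in> cball 0 1" using s(2) by (simp add: dist_norm norm_minus_commute)
  ultimately show "u \<in> set_plus (contingent_cone (solset F A yb) x) (cball 0 1)"
    unfolding set_plus_def using s(1) by blast
qed

lemma P_imp_Q:
  assumes P: "condP F A yb x \<eta>" and ep: "\<eta> > 0" and tp: "\<tau> > 0" and te: "\<tau> * \<eta> > 1"
    and xS: "x \<in> solset F A yb"
  shows "condQ F A yb x \<tau>"
  unfolding condQ_def
proof
  fix h
  define TS where "TS = contingent_cone (solset F A yb) x"
  define TA where "TA = contingent_cone A x"
  define DF where "DF = graph_deriv F x yb h"
  have xA: "x \<in> A" using xS by (simp add: solset_def)
  have TSne: "0 \<in> TS" unfolding TS_def using cc_zero[OF xS] .
  have TAne: "0 \<in> TA" unfolding TA_def using cc_zero[OF xA] .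
  show "edist_set h TS \<le> ereal \<tau> * (edist_set 0 DF + edist_set h TA)"
  proof (cases "DF = {}")
    case True
    thus ?thesis using TAne tp by (simp add: edist_set_def)
  next
    case False
    have key: "infdist h TS \<le> \<tau> * (dist 0 v + dist h w)" if v: "v \<in> DF" and w: "w \<in> TA" for v w
    proof -
      define c where "c = norm v + norm (h - w)"
      have c0: "c \<ge> 0" unfolding c_def by simp
      have scl: "infdist h TS \<le> 1 / l" if lp: "l > 0" and lc: "l * c < \<eta>" for l
      proof -
        have hv: "(h, v) \<in> contingent_cone (gph F) (x, yb)" using v unfolding DF_def graph_deriv_def by simp
        have "(l *\<^sub>R h, l *\<^sub>R v) \<in> contingent_cone (gph F) (x, yb)"
          using cc_scale[OF hv lp] by simp
        moreover have "l *\<^sub>R v \<in> set_scale (l * norm v) (cball 0 1)"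
          by (rule in_set_scale) (use lp in simp)
        ultimately have m1: "l *\<^sub>R h \<in> graph_deriv_inv_set F yb x (set_scale (l * norm v) (cball 0 1))"
          unfolding graph_deriv_inv_set_def by blast
        have "l *\<^sub>R w \<in> TA" using cc_scale[OF _ lp] w unfolding TA_def by blast
        moreover have "l *\<^sub>R (h - w) \<in> set_scale (l * norm (h - w)) (cball 0 1)"
          by (rule in_set_scale) (use lp in simp)
        moreover have "l *\<^sub>R h = l *\<^sub>R w + l *\<^sub>R (h - w)" by (simp add: algebra_simps)
        ultimately have m2: "l *\<^sub>R h \<in> set_plus TA (set_scale (l * norm (h - w)) (cball 0 1))"
          unfolding set_plus_def by blast
        have "l * norm v + l * norm (h - w) < \<eta>" using lc unfolding c_def by (simp add: algebra_simps)
        moreover have "l * norm v \<ge> 0" "l * norm (h - w) \<ge> 0" using lp by auto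
        ultimately have "l *\<^sub>R h \<in> set_plus TS (cball 0 1)"
          using P m1 m2 unfolding condP_def TA_def TS_def by blast
        then obtain s b where sb: "s \<in> TS" "b \<in> cball 0 1" "l *\<^sub>R h = s + b"
          unfolding set_plus_def by blast
        have s': "inverse l *\<^sub>R s \<in> TS" using cc_scale[OF _ positive_imp_inverse_positive[OF lp]] sb(1)
          unfolding TS_def by blast
        have "h = inverse l *\<^sub>R s + inverse l *\<^sub>R b" using lp sb(3)
          by (metis less_irrefl scaleR_right_distrib scaleR_scaleR left_inverse scaleR_one)
        hence "dist h (inverse l *\<^sub>R s) = norm (inverse l *\<^sub>R b)" by (simp add: dist_norm)
        also have "\<dots> \<le> 1 / l" using sb(2) lp by (simp add: field_simps)
        finally show ?thesis using infdist_le[OF s', of h] by linarith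
      qed
      have "infdist h TS \<le> \<tau> * c"
      proof (cases "c = 0")
        case True
        show ?thesis
        proof (rule ccontr)
          assume "\<not> ?thesis"
          hence ip: "infdist h TS > 0" using True by simp
          have "infdist h TS \<le> 1 / (2 / infdist h TS)" by (rule scl) (use ip True ep in auto)
          thus False using ip by simp
        qed
      next
        case False
        hence cp: "c > 0" using c0 by simp
        have "infdist h TS \<le> 1 / (1 / (\<tau> * c))"
        proof (rule scl)
          show "0 < 1 / (\<tau> * c)" using tp cp by simp
          have "1 / (\<tau> * c) * c = 1 / \<tau>" using cp by simp
          also have "\<dots> < \<eta>" using te tp by (simp add: field_simps)
          finally show "1 / (\<tau> * c) * c < \<eta>" .
        qed
        thus ?thesis by simp
      qed
      thus ?thesis unfolding c_def by (simp add: dist_norm)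
    qed
    have "infdist h TS \<le> \<tau> * (infdist 0 DF + infdist h TA)"
      by (rule inf_sum_bound) (use False TAne tp key in auto)
    moreover have "edist_set h TS = ereal (infdist h TS)" "edist_set 0 DF = ereal (infdist 0 DF)"
      "edist_set h TA = ereal (infdist h TA)" using TSne TAne False by (auto intro!: edist_ne)
    ultimately show ?thesis by simp
  qed
qed

lemma aux_lt: assumes "(n::real) \<ge> 0" shows "n < 2 * (n + 1)"
proof -
  have "2 * (n + 1) = 2 * n + 2" by simp
  thus ?thesis using assms by linarith
qed

lemma tri3: "norm ((a::'a::real_normed_vector) - d) \<le> norm (a - b) + norm (b - c) + norm (c - d)"
proof -
  have "a - d = (a - b) + ((b - c) + (c - d))" by simp
  hence "norm (a - d) \<le> norm (a - b) + norm ((b - c) + (c - d))" by (metis norm_triangle_ineq)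
  also have "norm ((b - c) + (c - d)) \<le> norm (b - c) + norm (c - d)" by (rule norm_triangle_ineq)
  finally show ?thesis by simp
qed

lemma tri2: "norm ((a::'a::real_normed_vector) - c) \<le> norm (a - b) + norm (b - c)"
  using tri3[where a=a and b=b and c=c and d=c] by simp

lemma S_imp_Q:
  assumes cg: "convex (gph F)" and cA: "convex A" and tp: "\<tau> > 0"
    and sub: "\<forall>z\<in>ball xb \<delta>. edist_set z (solset F A yb) \<le> ereal \<tau> * (edist_set yb (F z) + edist_set z A)"
    and xS: "x \<in> solset F A yb" and xball: "x \<in> ball xb \<delta>"
  shows "condQ F A yb x \<tau>"
  unfolding condQ_def
proof
  fix h
  define S where "S = solset F A yb"
  define TS where "TS = contingent_cone S x"
  define TA where "TA = contingent_cone A x"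
  define DF where "DF = graph_deriv F x yb h"
  have xA: "x \<in> A" and xF: "yb \<in> F x" using xS by (auto simp: solset_def)
  have xgph: "(x, yb) \<in> gph F" using xF by (simp add: gph_def)
  have cS: "convex S" unfolding S_def by (rule solset_convex[OF cg cA])
  have xS': "x \<in> S" using xS S_def by simp
  have TSne: "0 \<in> TS" unfolding TS_def using cc_zero[OF xS'] .
  have TAne: "0 \<in> TA" unfolding TA_def using cc_zero[OF xA] .
  obtain r where rp: "r > 0" and rb: "ball x r \<subseteq> ball xb \<delta>"
    using openE[OF open_ball xball] by blast
  show "edist_set h (contingent_cone (solset F A yb) x) \<le> ereal \<tau> * (edist_set 0 (graph_deriv F x yb h) + edist_set h (contingent_cone A x))"
  proof (cases "DF = {}")
    case True
    thus ?thesis using TAne tp unfolding DF_def TA_def by (simp add: edist_set_def)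
  next
    case False
    have key: "infdist h TS \<le> \<tau> * (dist 0 v + dist h w)" if v: "v \<in> DF" and w: "w \<in> TA" for v w
    proof -
      have "infdist h TS \<le> \<tau> * (norm v + norm (h - w)) + e" if ep: "e > 0" for e
      proof -
        define e1 where "e1 = e / (3 * \<tau> + 2)"
        have e1p: "e1 > 0" unfolding e1_def using ep tp by simp
        have hv: "(h, v) \<in> contingent_cone (gph F) (x, yb)" using v unfolding DF_def graph_deriv_def by simp
        obtain c m where c: "c \<in> gph F" and m: "m \<ge> 0" and cm: "norm ((h, v) - m *\<^sub>R (c - (x, yb))) < e1"
          using cc_approx[OF hv e1p] by blast
        obtain x' y' where c': "c = (x', y')" by (cases c)
        have y'F: "y' \<in> F x'" using c c' by (simp add: gph_def)
        have pd: "(h, v) - m *\<^sub>R (c - (x, yb)) = (h - m *\<^sub>R (x' - x), v - m *\<^sub>R (y' - yb))"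
          using c' by simp
        have n1: "norm (h - m *\<^sub>R (x' - x)) < e1" using cm pd norm_fst_le[where x="h - m *\<^sub>R (x' - x)" and y="v - m *\<^sub>R (y' - yb)"]
          by simp
        have n2: "norm (v - m *\<^sub>R (y' - yb)) < e1" using cm pd norm_snd_le[where x="h - m *\<^sub>R (x' - x)" and y="v - m *\<^sub>R (y' - yb)"]
          by simp
        have wT: "w \<in> contingent_cone A x" using w TA_def by simp
        obtain a \<mu> where a: "a \<in> A" and mu: "\<mu> \<ge> 0" and am: "norm (w - \<mu> *\<^sub>R (a - x)) < e1"
          using cc_approx[OF wT e1p] by blast
        define h' where "h' = m *\<^sub>R (x' - x)"
        define t where "t = min (inverse (1 + m + \<mu>)) (r / (2 * (norm h' + 1)))"
        have "norm h' + 1 > 0" using norm_ge_zero[of h'] by linarith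
        hence dpos: "2 * (norm h' + 1) > 0" by simp
        have t'p: "r / (2 * (norm h' + 1)) > 0" using rp dpos by (rule divide_pos_pos)
        have tp': "t > 0" unfolding t_def using m mu t'p by simp
        have t1: "t \<le> inverse (1 + m + \<mu>)" unfolding t_def by simp
        have tm: "t * m \<le> 1"
        proof -
          have "t * m \<le> inverse (1 + m + \<mu>) * m" using t1 m by (rule mult_right_mono)
          also have "\<dots> \<le> 1" using m mu by (simp add: field_simps)
          finally show ?thesis .
        qed
        have tmu: "t * \<mu> \<le> 1"
        proof -
          have "t * \<mu> \<le> inverse (1 + m + \<mu>) * \<mu>" using t1 mu by (rule mult_right_mono)
          also have "\<dots> \<le> 1" using m mu by (simp add: field_simps)
          finally show ?thesis .
        qed
        have tr: "t * norm h' < r"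
        proof -
          have "t \<le> r / (2 * (norm h' + 1))" unfolding t_def by simp
          hence "t * norm h' \<le> r / (2 * (norm h' + 1)) * norm h'" by (rule mult_right_mono) simp
          also have "\<dots> = r * (norm h' / (2 * (norm h' + 1)))" by simp
          also have "\<dots> < r * 1"
          proof (rule mult_strict_left_mono[OF _ rp])
            have "norm h' < 2 * (norm h' + 1)" by (rule aux_lt) simp
            thus "norm h' / (2 * (norm h' + 1)) < 1" using dpos by (simp add: divide_less_eq)
          qed
          finally show ?thesis by simp
        qed
        define z where "z = x + t *\<^sub>R h'"
        have zb: "z \<in> ball xb \<delta>"
        proof -
          have "dist x z = t * norm h'" unfolding z_def using tp' by (simp add: dist_norm)
          hence "z \<in> ball x r" using tr by simp
          thus ?thesis using rb by blast
        qed
        have "(x, yb) + (t * m) *\<^sub>R (c - (x, yb)) \<in> gph F"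
          by (rule conv_step[OF cg xgph c]) (use tp' m tm in auto)
        moreover have "(x, yb) + (t * m) *\<^sub>R (c - (x, yb)) = (z, yb + (t * m) *\<^sub>R (y' - yb))"
          unfolding z_def h'_def c' by simp
        ultimately have yz: "yb + (t * m) *\<^sub>R (y' - yb) \<in> F z" by (simp add: gph_def)
        have aA: "x + (t * \<mu>) *\<^sub>R (a - x) \<in> A"
          by (rule conv_step[OF cA xA a]) (use tp' mu tmu in auto)
        have d1: "infdist yb (F z) \<le> t * (norm v + e1)"
        proof -
          have "infdist yb (F z) \<le> dist yb (yb + (t * m) *\<^sub>R (y' - yb))" by (rule infdist_le[OF yz])
          also have "\<dots> = t * norm (m *\<^sub>R (y' - yb))" using tp' m by (simp add: dist_norm)
          also have "\<dots> \<le> t * (norm v + e1)"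
          proof -
            have "norm (m *\<^sub>R (y' - yb)) \<le> norm v + norm (v - m *\<^sub>R (y' - yb))"
              using norm_triangle_sub[of "m *\<^sub>R (y' - yb)" v] by (simp add: norm_minus_commute)
            thus ?thesis using n2 tp' by (intro mult_left_mono) auto
          qed
          finally show ?thesis .
        qed
        have d2: "infdist z A \<le> t * (norm (h - w) + 2 * e1)"
        proof -
          have "infdist z A \<le> dist z (x + (t * \<mu>) *\<^sub>R (a - x))" by (rule infdist_le[OF aA])
          also have "\<dots> = norm (t *\<^sub>R (h' - \<mu> *\<^sub>R (a - x)))" unfolding z_def dist_norm
            by (simp add: algebra_simps)
          also have "\<dots> = t * norm (h' - \<mu> *\<^sub>R (a - x))" using tp' by simp
          also have "\<dots> \<le> t * (norm (h - w) + 2 * e1)"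
          proof -
            have "norm (h' - \<mu> *\<^sub>R (a - x)) \<le> norm (h' - h) + norm (h - w) + norm (w - \<mu> *\<^sub>R (a - x))"
              by (rule tri3)
            moreover have "norm (h' - h) < e1" using n1 unfolding h'_def by (simp add: norm_minus_commute)
            ultimately show ?thesis using am tp' by (intro mult_left_mono) auto
          qed
          finally show ?thesis .
        qed
        have Fzne: "F z \<noteq> {}" using yz by blast
        have Ane: "A \<noteq> {}" using xA by blast
        have Sne: "S \<noteq> {}" using xS' by blast
        have "edist_set z S \<le> ereal \<tau> * (edist_set yb (F z) + edist_set z A)" using sub zb S_def by blast
        hence dz: "infdist z S \<le> \<tau> * (infdist yb (F z) + infdist z A)"
          using Fzne Ane Sne by (simp add: edist_ne)
        also have "\<dots> \<le> \<tau> * (t * (norm v + e1) + t * (norm (h - w) + 2 * e1))"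
          using d1 d2 tp by (intro mult_left_mono) auto
        finally have dz': "infdist z S \<le> t * (\<tau> * (norm v + norm (h - w) + 3 * e1))"
          by (simp add: algebra_simps)
        obtain s where s: "s \<in> S" "dist z s < infdist z S + t * e1"
          using infdist_lt[OF Sne, of z "infdist z S + t * e1"] tp' e1p by auto
        define q where "q = inverse t *\<^sub>R (s - x)"
        have qT: "q \<in> TS" unfolding q_def TS_def
          by (rule cc_convex[OF cS xS' s(1)]) (use tp' in simp)
        have eq: "h' - q = inverse t *\<^sub>R (z - s)" unfolding q_def z_def using tp'
          by (simp add: algebra_simps)
        have "norm (h' - q) = \<bar>inverse t\<bar> * norm (z - s)" unfolding eq by (rule norm_scaleR)
        also have "\<dots> = dist z s / t" using tp' by (simp add: dist_norm divide_inverse mult.commute)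
        finally have "norm (h' - q) = dist z s / t" .
        also have "dist z s / t < (infdist z S + t * e1) / t" using s(2) tp' by (rule divide_strict_right_mono)
        also have "\<dots> \<le> \<tau> * (norm v + norm (h - w) + 3 * e1) + e1" using dz' tp'
          by (simp add: field_simps)
        finally have hq: "norm (h' - q) < \<tau> * (norm v + norm (h - w) + 3 * e1) + e1" .
        have "infdist h TS \<le> dist h q" by (rule infdist_le[OF qT])
        also have "\<dots> \<le> norm (h - h') + norm (h' - q)" unfolding dist_norm
          by (rule tri2)
        also have "\<dots> < e1 + (\<tau> * (norm v + norm (h - w) + 3 * e1) + e1)"
          using n1 hq unfolding h'_def by simp
        also have "\<dots> = \<tau> * (norm v + norm (h - w)) + (3 * \<tau> + 2) * e1"
          by (simp add: algebra_simps)
        also have "(3 * \<tau> + 2) * e1 = e" unfolding e1_def using tp by simp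
        
        finally show ?thesis by simp
      qed
      hence "infdist h TS \<le> \<tau> * (norm v + norm (h - w))" by (rule field_le_epsilon)
      thus ?thesis by (simp add: dist_norm)
    qed
    have "infdist h TS \<le> \<tau> * (infdist 0 DF + infdist h TA)"
      by (rule inf_sum_bound) (use False TAne tp key in auto)
    moreover have "edist_set h TS = ereal (infdist h TS)" "edist_set 0 DF = ereal (infdist 0 DF)"
      "edist_set h TA = ereal (infdist h TA)" using TSne TAne False by (auto intro!: edist_ne)
    ultimately show ?thesis unfolding TS_def TA_def DF_def S_def by simp
  qed
qed

lemma weak_ekeland:
  fixes f :: "'a::complete_space \<Rightarrow> real"
  assumes cS: "closed S" and s0: "s0 \<in> S" and cf: "continuous_on UNIV f"
    and fnn: "\<And>z. z \<in> S \<Longrightarrow> f z \<ge> 0" and ap: "\<alpha> > 0"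
  shows "\<exists>s\<in>S. f s \<le> f s0 \<and> (\<forall>z\<in>S. f s \<le> f z + \<alpha> * dist z s)"
proof -
  define D where "D p = {z\<in>S. f z + \<alpha> * dist z p \<le> f p}" for p
  have Dcl: "closed (D p)" for p
  proof -
    have "closed {z. f z + \<alpha> * dist z p \<le> f p}"
      by (rule closed_Collect_le) (intro continuous_intros cf, simp)
    thus ?thesis unfolding D_def using cS by (simp add: Collect_conj_eq closed_Int Collect_mem_eq)
  qed
  have pD: "p \<in> D p" if "p \<in> S" for p using that unfolding D_def by simp
  have DS: "D p \<subseteq> S" for p unfolding D_def by auto
  have trans: "D q \<subseteq> D p" if q: "q \<in> D p" for p q
  proof
    fix z assume z: "z \<in> D q"
    have "f z + \<alpha> * dist z p \<le> f z + \<alpha> * (dist z q + dist q p)"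
      using dist_triangle[of z p q] ap by (intro add_left_mono mult_left_mono) auto
    also have "\<dots> = (f z + \<alpha> * dist z q) + \<alpha> * dist q p" by (simp add: algebra_simps)
    also have "\<dots> \<le> f q + \<alpha> * dist q p" using z unfolding D_def by simp
    also have "\<dots> \<le> f p" using q unfolding D_def by simp
    finally show "z \<in> D p" using z unfolding D_def by simp
  qed
  have bdd: "bdd_below (f ` D p)" for p
    using fnn DS by (intro bdd_belowI[of _ 0]) auto
  have ex: "\<exists>z. p \<in> S \<longrightarrow> z \<in> D p \<and> f z \<le> Inf (f ` D p) + (1/2)^n" for p n
  proof (cases "p \<in> S")
    case True
    have ne: "f ` D p \<noteq> {}" using pD[OF True] by blast
    have "Inf (f ` D p) < Inf (f ` D p) + (1/2)^n" by simp
    then obtain y where "y \<in> f ` D p" "y < Inf (f ` D p) + (1/2)^n" using cInf_lessD[OF ne] by blast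
    then obtain z where "z \<in> D p" "f z < Inf (f ` D p) + (1/2)^n" by blast
    thus ?thesis by (intro exI[of _ z]) simp
  qed simp
  have "\<forall>pn. \<exists>z. fst pn \<in> S \<longrightarrow> z \<in> D (fst pn) \<and> f z \<le> Inf (f ` D (fst pn)) + (1/2)^(snd pn)"
    using ex by blast
  from choice[OF this] obtain g' where g': "\<forall>pn. fst pn \<in> S \<longrightarrow> g' pn \<in> D (fst pn) \<and> f (g' pn) \<le> Inf (f ` D (fst pn)) + (1/2)^(snd pn)"
    by blast
  define g where "g p n = g' (p, n)" for p n
  have g: "g p n \<in> D p \<and> f (g p n) \<le> Inf (f ` D p) + (1/2)^n" if "p \<in> S" for p n
    using g'[rule_format, of "(p, n)"] that unfolding g_def by simp
  define s where "s n = rec_nat s0 (\<lambda>n p. g p n) n" for n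
  have s_0: "s 0 = s0" and s_Suc: "s (Suc n) = g (s n) n" for n unfolding s_def by simp_all
  have sS: "s n \<in> S" for n
  proof (induction n)
    case 0 thus ?case using s0 s_0 by simp
  next
    case (Suc n) thus ?case using g[OF Suc] DS s_Suc by auto
  qed
  have step: "s (Suc n) \<in> D (s n)" for n using g[OF sS] s_Suc by simp
  have nest: "D (s m) \<subseteq> D (s n)" if "n \<le> m" for m n
    using that
  proof (induction m rule: dec_induct)
    case base show ?case by simp
  next
    case (step m) thus ?case using trans[OF \<open>s (Suc m) \<in> D (s m)\<close>] by blast
  qed
  have smD: "s m \<in> D (s n)" if "n \<le> m" for m n using pD[OF sS] nest[OF that] by blast
  have diam: "\<alpha> * dist z (s (Suc n)) \<le> (1/2)^n" if z: "z \<in> D (s (Suc n))" for z n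
  proof -
    have "z \<in> D (s n)" using z nest[of n "Suc n"] by auto
    hence "Inf (f ` D (s n)) \<le> f z" using bdd by (intro cInf_lower) auto
    moreover have "f (s (Suc n)) \<le> Inf (f ` D (s n)) + (1/2)^n" using g[OF sS] s_Suc by simp
    moreover have "f z + \<alpha> * dist z (s (Suc n)) \<le> f (s (Suc n))" using z unfolding D_def by simp
    ultimately show ?thesis by linarith
  qed
  have small: "\<exists>N. (1/2::real)^N < c" if "c > 0" for c
    using real_arch_pow_inv[OF that, of "1/2"] by simp
  have Cs: "Cauchy s"
  proof (rule metric_CauchyI)
    fix e :: real assume ep: "e > 0"
    have "\<alpha> * e / 2 > 0" using ep ap by simp
    then obtain N where N: "(1/2::real)^N < \<alpha> * e / 2" using small by blast
    have b: "dist (s m) (s (Suc N)) < e / 2" if "m \<ge> Suc N" for m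
    proof -
      have "\<alpha> * dist (s m) (s (Suc N)) \<le> (1/2)^N" using diam smD[OF that] by blast
      hence "\<alpha> * dist (s m) (s (Suc N)) < \<alpha> * (e / 2)" using N by simp
      thus ?thesis using ap by simp
    qed
    show "\<exists>M. \<forall>m\<ge>M. \<forall>n\<ge>M. dist (s m) (s n) < e"
    proof (intro exI allI impI)
      fix m n assume "m \<ge> Suc N" "n \<ge> Suc N"
      hence "dist (s m) (s (Suc N)) < e/2" "dist (s n) (s (Suc N)) < e/2" using b by auto
      thus "dist (s m) (s n) < e" using dist_triangle2[of "s m" "s n" "s (Suc N)"] by linarith
    qed
  qed
  then obtain l where sl: "s \<longlonglongrightarrow> l" using complete_UNIV convergent_def Cauchy_convergent_iff by blast
  have lD: "l \<in> D (s n)" for n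
  proof (rule Lim_in_closed_set[OF Dcl _ _ sl])
    show "eventually (\<lambda>m. s m \<in> D (s n)) sequentially"
      using smD unfolding eventually_sequentially by blast
  qed simp
  have lS: "l \<in> S" using lD[of 0] DS by blast
  have fl: "f l \<le> f s0"
  proof -
    have "f l + \<alpha> * dist l (s 0) \<le> f (s 0)" using lD[of 0] unfolding D_def by simp
    moreover have "\<alpha> * dist l (s 0) \<ge> 0" using ap by simp
    ultimately have "f l \<le> f (s 0)" by linarith
    thus ?thesis using s_0 by simp
  qed
  have "\<forall>z\<in>S. f l \<le> f z + \<alpha> * dist z l"
  proof (rule ballI, rule ccontr)
    fix z assume zS: "z \<in> S" and neg: "\<not> f l \<le> f z + \<alpha> * dist z l"
    have zD: "z \<in> D (s n)" for n
    proof -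
      have "f z + \<alpha> * dist z (s n) \<le> f z + \<alpha> * (dist z l + dist l (s n))"
        using dist_triangle[of z "s n" l] ap by (intro add_left_mono mult_left_mono) auto
      also have "\<dots> = (f z + \<alpha> * dist z l) + \<alpha> * dist l (s n)" by (simp add: algebra_simps)
      also have "\<dots> \<le> f l + \<alpha> * dist l (s n)" using neg by simp
      also have "\<dots> \<le> f (s n)" using lD[of n] unfolding D_def by simp
      finally show ?thesis using zS unfolding D_def by simp
    qed
    have "dist z l = 0"
    proof (rule ccontr)
      assume "dist z l \<noteq> 0"
      hence dp: "dist z l > 0" by simp
      have "\<alpha> * dist z l / 2 > 0" using dp ap by simp
      then obtain N where N: "(1/2::real)^N < \<alpha> * dist z l / 2" using small by blast
      have "\<alpha> * dist z (s (Suc N)) \<le> (1/2)^N" using diam zD by blast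
      moreover have "\<alpha> * dist l (s (Suc N)) \<le> (1/2)^N" using diam lD by blast
      moreover have "\<alpha> * dist z l \<le> \<alpha> * dist z (s (Suc N)) + \<alpha> * dist l (s (Suc N))"
      proof -
        have "\<alpha> * dist z l \<le> \<alpha> * (dist z (s (Suc N)) + dist l (s (Suc N)))"
          using dist_triangle2[of z l "s (Suc N)"] ap by (intro mult_left_mono) auto
        thus ?thesis by (simp only: distrib_left)
      qed
      ultimately show False using N by linarith
    qed
    hence "z = l" by simp
    thus False using neg by simp
  qed
  thus ?thesis using lS fl by blast
qed



lemma solset_closed: assumes "closed (gph F)" "closed A" shows "closed (solset F A yb)"
proof -
  have "{x. yb \<in> F x} = (\<lambda>x. (x, yb)) -` gph F" by (auto simp: gph_def)
  moreover have "closed ((\<lambda>x. (x, yb)) -` gph F)"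
    by (rule closed_vimage[OF assms(1)]) (intro continuous_intros)
  ultimately show ?thesis unfolding solset_def using assms(2) by (simp add: closed_Int)
qed

lemma ek_tangent:
  assumes w: "w \<in> contingent_cone S s" and ep: "\<epsilon> \<ge> 0"
    and min: "\<forall>z\<in>S. dist x s \<le> dist x z + \<epsilon> * dist z s"
  shows "norm (x - s) \<le> norm ((x - s) - w) + \<epsilon> * norm w"
proof -
  define h where "h = x - s"
  obtain vs ts where v: "vs \<longlonglongrightarrow> w" "ts \<longlonglongrightarrow> 0" "\<forall>n. ts n > 0" "\<forall>n. s + ts n *\<^sub>R vs n \<in> S"
    using w unfolding contingent_cone_def by blast
  have "norm h \<le> (norm (h - w) + \<epsilon> * norm w) + e" if e: "e > 0" for e
  proof -
    define e' where "e' = e / (1 + \<epsilon>)"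
    have e'p: "e' > 0" unfolding e'_def using e ep by simp
    have ev1: "eventually (\<lambda>n. dist (vs n) w < e') sequentially" using v(1) e'p by (rule tendstoD)
    have ev2: "eventually (\<lambda>n. dist (ts n) 0 < 1) sequentially" using v(2) by (rule tendstoD) simp
    from eventually_conj[OF ev1 ev2] obtain N where NN: "\<forall>n\<ge>N. dist (vs n) w < e' \<and> dist (ts n) 0 < 1"
      unfolding eventually_sequentially by blast
    define n where "n = N"
    have n1: "dist (vs n) w < e'" and n2: "dist (ts n) 0 < 1" using NN n_def by auto
    define t where "t = ts n"
    have tp: "t > 0" using v(3) t_def by simp
    have t1: "t < 1" using n2 tp t_def by simp
    have zS: "s + t *\<^sub>R vs n \<in> S" using v(4) t_def by simp
    have "dist x s \<le> dist x (s + t *\<^sub>R vs n) + \<epsilon> * dist (s + t *\<^sub>R vs n) s"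
      using min zS by blast
    also have "dist x (s + t *\<^sub>R vs n) = norm (h - t *\<^sub>R vs n)" unfolding h_def dist_norm
      by (simp add: algebra_simps)
    also have "dist (s + t *\<^sub>R vs n) s = t * norm (vs n)" using tp by (simp add: dist_norm)
    finally have i1: "norm h \<le> norm (h - t *\<^sub>R vs n) + \<epsilon> * (t * norm (vs n))"
      unfolding h_def by (simp add: dist_norm)
    have "norm (h - t *\<^sub>R vs n) \<le> norm (h - t *\<^sub>R w) + norm (t *\<^sub>R w - t *\<^sub>R vs n)"
      by (rule tri2)
    also have "norm (t *\<^sub>R w - t *\<^sub>R vs n) = t * norm (vs n - w)"
    proof -
      have "t *\<^sub>R w - t *\<^sub>R vs n = t *\<^sub>R (w - vs n)" by (simp add: scaleR_diff_right)
      thus ?thesis using tp by (simp add: norm_minus_commute)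
    qed
    also have "h - t *\<^sub>R w = (1 - t) *\<^sub>R h + t *\<^sub>R (h - w)" by (simp add: algebra_simps)
    also have "norm \<dots> \<le> (1 - t) * norm h + t * norm (h - w)"
    proof -
      have "norm ((1 - t) *\<^sub>R h + t *\<^sub>R (h - w)) \<le> norm ((1 - t) *\<^sub>R h) + norm (t *\<^sub>R (h - w))"
        by (rule norm_triangle_ineq)
      thus ?thesis using tp t1 by simp
    qed
    finally have i2: "norm (h - t *\<^sub>R vs n) \<le> (1 - t) * norm h + t * norm (h - w) + t * norm (vs n - w)"
      by simp
    have e1: "(1 - t) * norm h = norm h - t * norm h" by (simp add: algebra_simps)
    have "t * norm h \<le> t * norm (h - w) + t * norm (vs n - w) + \<epsilon> * (t * norm (vs n))"
      using i1 i2 e1 by linarith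
    also have "\<dots> = t * (norm (h - w) + norm (vs n - w) + \<epsilon> * norm (vs n))" by (simp add: algebra_simps)
    finally have "t * norm h \<le> t * (norm (h - w) + norm (vs n - w) + \<epsilon> * norm (vs n))" .
    hence i3: "norm h \<le> norm (h - w) + norm (vs n - w) + \<epsilon> * norm (vs n)" using tp
      by (simp add: mult_le_cancel_left_pos)
    have nv: "norm (vs n) \<le> norm w + e'" using n1 norm_triangle_sub[of "vs n" w] by (simp add: dist_norm)
    have nvw: "norm (vs n - w) < e'" using n1 by (simp add: dist_norm)
    have "norm h \<le> norm (h - w) + e' + \<epsilon> * (norm w + e')"
      using i3 nvw mult_left_mono[OF nv ep] by linarith
    also have "\<dots> = norm (h - w) + \<epsilon> * norm w + (1 + \<epsilon>) * e'" by (simp add: algebra_simps)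
    also have "(1 + \<epsilon>) * e' = e" unfolding e'_def using ep by simp
    finally show ?thesis by simp
  qed
  hence "norm h \<le> norm (h - w) + \<epsilon> * norm w" by (rule field_le_epsilon)
  thus ?thesis unfolding h_def .
qed

lemma ek_infdist:
  assumes ne: "0 \<in> T" and ep: "\<epsilon> \<ge> 0"
    and H: "\<And>w. w \<in> T \<Longrightarrow> norm h \<le> norm (h - w) + \<epsilon> * norm w"
  shows "(1 - 2 * \<epsilon>) * norm h \<le> infdist h T"
proof (rule infdist_ge)
  show "T \<noteq> {}" using ne by blast
  fix w assume w: "w \<in> T"
  show "(1 - 2 * \<epsilon>) * norm h \<le> dist h w"
  proof (cases "norm w \<le> 2 * norm h")
    case True
    have "\<epsilon> * norm w \<le> \<epsilon> * (2 * norm h)" using True ep by (rule mult_left_mono)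
    thus ?thesis using H[OF w] by (simp add: dist_norm algebra_simps)
  next
    case False
    have "norm w \<le> norm h + norm (h - w)" using norm_triangle_sub[of w h] by (simp add: norm_minus_commute)
    moreover have "(1 - 2 * \<epsilon>) * norm h \<le> norm h" using ep by (simp add: algebra_simps)
    ultimately show ?thesis using False by (simp add: dist_norm)
  qed
qed

lemma Q_imp_S:
  fixes F :: "'a::banach \<Rightarrow> 'b::real_normed_vector set"
  assumes cg: "convex (gph F)" and cA: "convex A" and clg: "closed (gph F)" and clA: "closed A"
    and tp: "\<tau> > 0"
    and Q: "\<forall>s\<in>solset F A yb \<inter> ball xb \<delta>. condQ F A yb s \<tau>"
    and xbS: "xb \<in> solset F A yb" and ep: "\<epsilon> > 0" and e2: "\<epsilon> < 1/2"
  shows "\<forall>x\<in>ball xb (\<delta>/2). edist_set x (solset F A yb)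
           \<le> ereal (\<tau> / (1 - 2 * \<epsilon>)) * (edist_set yb (F x) + edist_set x A)"
proof
  fix x assume xball: "x \<in> ball xb (\<delta>/2)"
  define S where "S = solset F A yb"
  define \<tau>' where "\<tau>' = \<tau> / (1 - 2 * \<epsilon>)"
  have ce: "1 - 2 * \<epsilon> > 0" using e2 by simp
  have tp': "\<tau>' > 0" unfolding \<tau>'_def using tp ce by simp
  have clS: "closed S" unfolding S_def by (rule solset_closed[OF clg clA])
  have cS: "convex S" unfolding S_def by (rule solset_convex[OF cg cA])
  have xbS': "xb \<in> S" using xbS S_def by simp
  have xbA: "xb \<in> A" using xbS by (simp add: solset_def)
  have Sne: "S \<noteq> {}" using xbS' by blast
  have Ane: "A \<noteq> {}" using xbA by blast
  show "edist_set x (solset F A yb) \<le> ereal (\<tau> / (1 - 2 * \<epsilon>)) * (edist_set yb (F x) + edist_set x A)"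
  proof (cases "F x = {}")
    case True
    thus ?thesis using tp ce Ane by (simp add: edist_set_def)
  next
    case False
    have key: "infdist x S \<le> \<tau>' * (dist yb y + dist x a)" if y: "y \<in> F x" and a: "a \<in> A" for y a
    proof -
      have cf: "continuous_on UNIV (\<lambda>z. dist x z)" by (intro continuous_intros)
      obtain s where sS: "s \<in> S" and sle: "dist x s \<le> dist x xb"
        and smin: "\<forall>z\<in>S. dist x s \<le> dist x z + \<epsilon> * dist z s"
        using weak_ekeland[OF clS xbS' cf _ ep] by auto
      have sball: "s \<in> ball xb \<delta>"
      proof -
        have "dist xb s \<le> dist xb x + dist x s" by (rule dist_triangle)
        also have "\<dots> \<le> 2 * dist x xb" using sle by (simp add: dist_commute)
        also have "\<dots> < \<delta>" using xball by (simp add: dist_commute)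
        finally show ?thesis by simp
      qed
      have sS': "s \<in> solset F A yb" using sS S_def by simp
      have sA: "s \<in> A" and sF: "yb \<in> F s" using sS' by (auto simp: solset_def)
      define h where "h = x - s"
      have TSne: "0 \<in> contingent_cone S s" using cc_zero[OF sS] .
      have lower: "(1 - 2 * \<epsilon>) * norm h \<le> infdist h (contingent_cone S s)"
        by (rule ek_infdist[OF TSne]) (use ep ek_tangent[OF _ _ smin] h_def in auto)
      have Qs: "condQ F A yb s \<tau>" using Q sS' sball by blast
      have gp1: "(x, y) \<in> gph F" "(s, yb) \<in> gph F" using y sF by (auto simp: gph_def)
      have "1 *\<^sub>R ((x, y) - (s, yb)) \<in> contingent_cone (gph F) (s, yb)"
        by (rule cc_convex[OF cg gp1(2) gp1(1)]) simp
      hence DFm: "y - yb \<in> graph_deriv F s yb h" unfolding graph_deriv_def h_def by simp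
      have "1 *\<^sub>R (a - s) \<in> contingent_cone A s" by (rule cc_convex[OF cA sA a]) simp
      hence TAm: "a - s \<in> contingent_cone A s" by simp
      have "edist_set h (contingent_cone S s) \<le> ereal \<tau> *
          (edist_set 0 (graph_deriv F s yb h) + edist_set h (contingent_cone A s))"
        using Qs unfolding condQ_def S_def by blast
      moreover have "edist_set h (contingent_cone S s) = ereal (infdist h (contingent_cone S s))"
        "edist_set 0 (graph_deriv F s yb h) = ereal (infdist 0 (graph_deriv F s yb h))"
        "edist_set h (contingent_cone A s) = ereal (infdist h (contingent_cone A s))"
        using TSne DFm TAm by (auto intro!: edist_ne)
      ultimately have iq: "infdist h (contingent_cone S s) \<le> \<tau> * (infdist 0 (graph_deriv F s yb h) + infdist h (contingent_cone A s))"
        by simp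
      have "infdist 0 (graph_deriv F s yb h) \<le> dist 0 (y - yb)" by (rule infdist_le[OF DFm])
      moreover have "infdist h (contingent_cone A s) \<le> dist h (a - s)" by (rule infdist_le[OF TAm])
      moreover have "dist 0 (y - yb) = dist yb y" by (simp add: dist_norm norm_minus_commute)
      moreover have "dist h (a - s) = dist x a" unfolding h_def by (simp add: dist_norm)
      ultimately have "\<tau> * (infdist 0 (graph_deriv F s yb h) + infdist h (contingent_cone A s)) \<le> \<tau> * (dist yb y + dist x a)"
        using tp by (intro mult_left_mono) auto
      with iq lower have m: "(1 - 2 * \<epsilon>) * norm h \<le> \<tau> * (dist yb y + dist x a)" by linarith
      have "infdist x S \<le> dist x s" by (rule infdist_le[OF sS])
      also have "\<dots> = norm h" unfolding h_def by (simp add: dist_norm)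
      also have "\<dots> \<le> \<tau> * (dist yb y + dist x a) / (1 - 2 * \<epsilon>)" using m ce by (simp add: field_simps)
      also have "\<dots> = \<tau>' * (dist yb y + dist x a)" unfolding \<tau>'_def by simp
      finally show ?thesis .
    qed
    have "infdist x S \<le> \<tau>' * (infdist yb (F x) + infdist x A)"
      by (rule inf_sum_bound) (use False Ane tp' key in auto)
    moreover have "edist_set x S = ereal (infdist x S)" "edist_set yb (F x) = ereal (infdist yb (F x))"
      "edist_set x A = ereal (infdist x A)" using Sne Ane False by (auto intro!: edist_ne)
    ultimately show ?thesis unfolding S_def \<tau>'_def by simp
  qed
qed

lemma ereal_le_dense:
  fixes I :: ereal
  assumes "\<And>c. c > b \<Longrightarrow> I \<le> ereal c"
  shows "I \<le> ereal b"
proof (rule dense_ge)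
  fix y :: ereal assume y: "ereal b < y"
  show "I \<le> y"
  proof (cases y)
    case (real c) thus ?thesis using y assms by simp
  next
    case PInf thus ?thesis by simp
  next
    case MInf thus ?thesis using y by simp
  qed
qed

lemma ereal_Inf_eq:
  assumes "A \<subseteq> B" "\<And>b c. b \<in> B \<Longrightarrow> c > b \<Longrightarrow> c \<in> A"
  shows "Inf (ereal ` A) = Inf (ereal ` B)"
proof (rule antisym)
  show "Inf (ereal ` B) \<le> Inf (ereal ` A)" using assms(1) by (intro Inf_superset_mono) auto
  show "Inf (ereal ` A) \<le> Inf (ereal ` B)"
  proof (rule Inf_greatest)
    fix y assume "y \<in> ereal ` B"
    then obtain b where b: "b \<in> B" "y = ereal b" by blast
    have "Inf (ereal ` A) \<le> ereal b"
      by (rule ereal_le_dense) (use assms(2)[OF b(1)] in \<open>auto intro: Inf_lower\<close>)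
    thus "Inf (ereal ` A) \<le> y" using b by simp
  qed
qed

lemma ereal_inv_inv: "0 \<le> (x::ereal) \<Longrightarrow> inverse (inverse x) = x"
  by (cases x) (auto simp: zero_ereal_def)

lemma eta_inv:
  assumes Ep: "\<And>e. e \<in> E \<Longrightarrow> e > 0" and Tp: "\<And>t. t \<in> T \<Longrightarrow> t > 0"
    and a: "\<And>t. t \<in> T \<Longrightarrow> 1 / t \<in> E"
    and b: "\<And>e t. e \<in> E \<Longrightarrow> t > 0 \<Longrightarrow> t * e > 1 \<Longrightarrow> t \<in> T"
  shows "(if E = {} then 0 else Sup (ereal ` E)) = inverse (Inf (ereal ` T))"
proof (cases "E = {}")
  case True
  hence "T = {}" using a by blast
  thus ?thesis using True by (simp add: top_ereal_def)
next
  case False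
  define I where "I = Inf (ereal ` T)"
  define Sp where "Sp = Sup (ereal ` E)"
  obtain e0 where e0: "e0 \<in> E" using False by blast
  have I0: "0 \<le> I" unfolding I_def using Tp by (intro Inf_greatest) (auto simp: less_imp_le)
  have Sp0: "0 \<le> Sp" unfolding Sp_def using Ep[OF e0] e0
    by (metis Sup_upper image_eqI less_imp_le order_trans ereal_less_eq(5) zero_ereal_def)
  have le1: "Sp \<le> inverse I" unfolding Sp_def
  proof (rule Sup_least)
    fix y assume "y \<in> ereal ` E"
    then obtain e where e: "e \<in> E" "y = ereal e" by blast
    have ep: "e > 0" using Ep[OF e(1)] .
    have "I \<le> ereal (1 / e)"
    proof (rule ereal_le_dense)
      fix c assume c: "c > 1 / e"
      hence "c * e > 1" using ep by (simp add: field_simps)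
      moreover have "c > 0" using c ep by (smt (verit) divide_pos_pos)
      ultimately have "c \<in> T" using b[OF e(1)] by blast
      thus "I \<le> ereal c" unfolding I_def by (intro Inf_lower) simp
    qed
    hence "inverse (ereal (1 / e)) \<le> inverse I" by (rule ereal_inverse_antimono[OF I0])
    thus "y \<le> inverse I" using e ep by simp
  qed
  have "inverse Sp \<le> I" unfolding I_def
  proof (rule Inf_greatest)
    fix y assume "y \<in> ereal ` T"
    then obtain t where t: "t \<in> T" "y = ereal t" by blast
    have tp: "t > 0" using Tp[OF t(1)] .
    have "ereal (1 / t) \<le> Sp" unfolding Sp_def using a[OF t(1)] by (intro Sup_upper) simp
    hence "inverse Sp \<le> inverse (ereal (1 / t))" using tp by (intro ereal_inverse_antimono) simp_all
    thus "inverse Sp \<le> y" using t tp by simp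
  qed
  hence "inverse I \<le> inverse (inverse Sp)" using Sp0 by (intro ereal_inverse_antimono) (simp_all add: ereal_inverse_nonneg_iff)
  hence le2: "inverse I \<le> Sp" using ereal_inv_inv[OF Sp0] by simp
  show ?thesis using False le1 le2 unfolding I_def Sp_def by simp
qed

theorem theorem3p1:
  fixes F :: "'a::banach \<Rightarrow> 'b::banach set" and A :: "'a set" and xb :: 'a and yb :: 'b
  assumes "closed (gph F)" and "convex (gph F)"
    and "closed A" and "convex A"
    and "xb \<in> solset F A yb"
  shows "inverse (subreg F A xb yb) = eta_A F A xb yb \<and> eta_A F A xb yb = inverse (tau_A F A xb yb)"
proof -
  define SR where "SR = {\<tau>. \<tau> > 0 \<and> (\<exists>\<delta>>0. \<forall>x\<in>ball xb \<delta>.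
      edist_set x (solset F A yb) \<le> ereal \<tau> * (edist_set yb (F x) + edist_set x A))}"
  define TQ where "TQ = {\<tau>. \<tau> > 0 \<and> (\<exists>\<delta>>0. \<forall>x\<in>solset F A yb \<inter> ball xb \<delta>. condQ F A yb x \<tau>)}"
  define EP where "EP = {\<eta>. \<eta> > 0 \<and> (\<exists>\<delta>>0. \<forall>x\<in>solset F A yb \<inter> ball xb \<delta>. condP F A yb x \<eta>)}"
  have sub_def': "subreg F A xb yb = Inf (ereal ` SR)" unfolding subreg_def SR_def by simp
  have tau_def': "tau_A F A xb yb = Inf (ereal ` TQ)" unfolding tau_A_def TQ_def by simp
  have eta_def': "eta_A F A xb yb = (if EP = {} then 0 else Sup (ereal ` EP))" unfolding eta_A_def EP_def Let_def by simp
  have SR_TQ: "SR \<subseteq> TQ"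
  proof
    fix \<tau> assume "\<tau> \<in> SR"
    then obtain \<delta> where tp: "\<tau> > 0" and dp: "\<delta> > 0" and sub: "\<forall>x\<in>ball xb \<delta>.
      edist_set x (solset F A yb) \<le> ereal \<tau> * (edist_set yb (F x) + edist_set x A)"
      unfolding SR_def by blast
    have "\<forall>x\<in>solset F A yb \<inter> ball xb \<delta>. condQ F A yb x \<tau>"
      using S_imp_Q[OF assms(2) assms(4) tp sub] by blast
    thus "\<tau> \<in> TQ" unfolding TQ_def using tp dp by blast
  qed
  have TQ_SR: "c \<in> SR" if b: "b \<in> TQ" and c: "c > b" for b c
  proof -
    obtain \<delta> where tp: "b > 0" and dp: "\<delta> > 0" and Q: "\<forall>x\<in>solset F A yb \<inter> ball xb \<delta>. condQ F A yb x b"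
      using b unfolding TQ_def by blast
    define \<epsilon> where "\<epsilon> = (1 - b / c) / 2"
    have cp: "c > 0" using tp c by simp
    have bc: "b / c < 1" using c cp by (simp add: field_simps)
    have bcp: "b / c > 0" using tp cp by simp
    have ep1: "\<epsilon> > 0" unfolding \<epsilon>_def using bc by simp
    have ep2: "\<epsilon> < 1/2" unfolding \<epsilon>_def using bcp by (simp only: field_simps) simp
    note ep = ep1 ep2
    have "1 - 2 * \<epsilon> = b / c" unfolding \<epsilon>_def by (simp add: field_simps)
    hence "b / (1 - 2 * \<epsilon>) = c" using tp cp by simp
    hence "\<forall>x\<in>ball xb (\<delta>/2). edist_set x (solset F A yb) \<le> ereal c * (edist_set yb (F x) + edist_set x A)"
      using Q_imp_S[OF assms(2) assms(4) assms(1) assms(3) tp Q assms(5) ep] by simp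
    moreover have "\<delta> / 2 > 0" using dp by simp
    ultimately show "c \<in> SR" unfolding SR_def using cp by blast
  qed
  have subtau: "subreg F A xb yb = tau_A F A xb yb"
    unfolding sub_def' tau_def' by (rule ereal_Inf_eq[OF SR_TQ TQ_SR])
  have eta: "eta_A F A xb yb = inverse (tau_A F A xb yb)"
    unfolding eta_def' tau_def'
  proof (rule eta_inv)
    show "\<And>e. e \<in> EP \<Longrightarrow> e > 0" unfolding EP_def by blast
    show "\<And>t. t \<in> TQ \<Longrightarrow> t > 0" unfolding TQ_def by blast
    show "1 / t \<in> EP" if t: "t \<in> TQ" for t
    proof -
      obtain \<delta> where tp: "t > 0" and dp: "\<delta> > 0" and Q: "\<forall>x\<in>solset F A yb \<inter> ball xb \<delta>. condQ F A yb x t"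
        using t unfolding TQ_def by blast
      have "\<forall>x\<in>solset F A yb \<inter> ball xb \<delta>. condP F A yb x (1/t)"
        using Q Q_imp_P tp by blast
      thus ?thesis unfolding EP_def using tp dp by auto
    qed
    show "t \<in> TQ" if e: "e \<in> EP" and tp: "t > 0" and te: "t * e > 1" for e t
    proof -
      obtain \<delta> where ep: "e > 0" and dp: "\<delta> > 0" and P: "\<forall>x\<in>solset F A yb \<inter> ball xb \<delta>. condP F A yb x e"
        using e unfolding EP_def by blast
      have "\<forall>x\<in>solset F A yb \<inter> ball xb \<delta>. condQ F A yb x t"
        using P P_imp_Q[OF _ ep tp te] by blast
      thus ?thesis unfolding TQ_def using tp dp by blast
    qed
  qed
  show ?thesis using subtau eta by simp
qed

end
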